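(* Let $k\ge1$ and let $M_k$ be the set of LTI probability measures on $X_k=\{0,1\}^{\{0,\ldots,k\}}$. Then: (i) the map ${\cal C}\mapsto\nu_{\cal C}$ is a bijection from the set of cycles of the de Bruijn graph $G_k$ onto the set of $k$-primitive BPC measures on $\{0,1\}^{\mathbb{Z}}$; (ii) the extreme points of the convex polytope $M_k$ are exactly the measures $\pi_k\nu_{\cal C}$ with ${\cal C}$ a cycle of $G_k$; (iii) every $\mu_k\in M_k$ equals $\pi_k\nu$ for some finite convex combination $\nu$ of $k$-primitive BPC measures $\nu_{\cal C}$; in particular every $\mu_k\in M_k$ has a translation invariant extension to $\{0,1\}^{\mathbb{Z}}$ which is a PC measure.
   Context: LTI: for all subsets $A,A'\subset\{0,\ldots,k\}$ with $A'$ a translate of $A$, the marginal on $\{0,1\}^{A'}$ is the translate of the marginal on $\{0,1\}^A$. $\pi_k\nu$ is the marginal of a measure $\nu$ on $\{0,1\}^{\mathbb{Z}}$ on the coordinates $0,\ldots,k$. The binary de Bruijn graph $G_k$ of order $k$ is the directed graph whose vertices are the binary strings of length $k$ and whose edges are the binary strings of length $k+1$, the edge $a\theta b$ ($a,b\in\{0,1\}$, $\theta$ a string of length $k-1$) going from vertex $a\theta$ to vertex $\theta b$ (so there are loops at $0^k$ and $1^k$). A cycle is a closed directed path with no repeated vertex (loops count as cycles), considered up to cyclic rotation of its starting point. For a minimal closed path $P$ with edges $\eta^{(1)},\ldots,\eta^{(p)}$ in order (minimal meaning it is not a repetition of a shorter closed path), the associated periodic configuration is obtained by traversing $P$ repeatedly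 and recording the first symbol $\eta^{(j)}_0$ of each edge, and $\nu_P$ is the measure giving mass $1/p$ to each of the $p$ translates of this configuration. A PC measure is a translation invariant probability measure on $\{0,1\}^{\mathbb{Z}}$ supported on periodic configurations; a BPC measure is one giving mass $1/p$ to each of the $p$ translates of a single configuration of minimal period $p$. A periodic configuration $\eta$ of minimal period $p$ (and its BPC measure) is $k$-primitive if $\eta_i\cdots\eta_{i+k-1}=\eta_j\cdots\eta_{j+k-1}$ only when $p$ divides $j-i$. *)

theory Defs
  imports "HOL-Probability.Probability"
begin

text \<open>Elements of X_k are boolean lists of length k+1 (position i = coordinate i).
  A probability measure on X_k is a nonnegative function on such lists summing to 1.\<close>

definition Xk :: "nat \<Rightarrow> bool list set" where
  "Xk k = {x. length x = Suc k}"

definition prob_on_Xk :: "nat \<Rightarrow> (bool list \<Rightarrow> real) \<Rightarrow> bool" where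
  "prob_on_Xk k p \<longleftrightarrow> (\<forall>x. 0 \<le> p x) \<and> (\<forall>x. p x \<noteq> 0 \<longrightarrow> x \<in> Xk k)
     \<and> sum p (Xk k) = 1"

definition marg :: "nat \<Rightarrow> (bool list \<Rightarrow> real) \<Rightarrow> nat set \<Rightarrow> nat \<Rightarrow> (nat \<Rightarrow> bool) \<Rightarrow> real" where
  "marg k p A t y = (\<Sum>x\<in>{x\<in>Xk k. \<forall>i\<in>A. x ! (i + t) = y i}. p x)"

text \<open>LTI: marginal on a translate A+t equals the translate of the marginal on A
  (negative translations are the same condition with roles exchanged).\<close>
definition LTI :: "nat \<Rightarrow> (bool list \<Rightarrow> real) \<Rightarrow> bool" where
  "LTI k p \<longleftrightarrow> (\<forall>A t y. A \<subseteq> {0..k} \<and> (\<lambda>i. i + t) ` A \<subseteq> {0..k}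
       \<longrightarrow> marg k p A t y = marg k p A 0 y)"

definition Mk :: "nat \<Rightarrow> (bool list \<Rightarrow> real) set" where
  "Mk k = {p. prob_on_Xk k p \<and> LTI k p}"

definition extreme_pt :: "('a \<Rightarrow> real) set \<Rightarrow> ('a \<Rightarrow> real) \<Rightarrow> bool" where
  "extreme_pt S x \<longleftrightarrow> x \<in> S \<and>
     \<not> (\<exists>a\<in>S. \<exists>b\<in>S. \<exists>t::real. 0 < t \<and> t < 1 \<and> a \<noteq> b \<and> x = (\<lambda>z. t * a z + (1 - t) * b z))"

type_synonym config = "int \<Rightarrow> bool"

definition shift :: "int \<Rightarrow> config \<Rightarrow> config" where
  "shift j \<eta> = (\<lambda>i. \<eta> (i + j))"

definition is_period :: "config \<Rightarrow> nat \<Rightarrow> bool" where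
  "is_period \<eta> p \<longleftrightarrow> 0 < p \<and> (\<forall>i. \<eta> (i + int p) = \<eta> i)"

definition periodic :: "config \<Rightarrow> bool" where
  "periodic \<eta> \<longleftrightarrow> (\<exists>p. is_period \<eta> p)"

definition min_period :: "config \<Rightarrow> nat \<Rightarrow> bool" where
  "min_period \<eta> p \<longleftrightarrow> is_period \<eta> p \<and> (\<forall>q. 0 < q \<and> q < p \<longrightarrow> \<not> is_period \<eta> q)"

definition translates_measure :: "config \<Rightarrow> nat \<Rightarrow> config pmf" where
  "translates_measure \<eta> p = map_pmf (\<lambda>j. shift (int j) \<eta>) (pmf_of_set {0..<p})"

text \<open>Measures on {0,1}^Z supported on (countably many) periodic configurations are
  discrete, so they are represented as pmfs.\<close>
definition trans_inv :: "config pmf \<Rightarrow> bool" where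
  "trans_inv \<nu> \<longleftrightarrow> map_pmf (shift 1) \<nu> = \<nu>"

definition PC :: "config pmf \<Rightarrow> bool" where
  "PC \<nu> \<longleftrightarrow> trans_inv \<nu> \<and> (\<forall>\<eta>\<in>set_pmf \<nu>. periodic \<eta>)"

definition k_primitive :: "nat \<Rightarrow> config \<Rightarrow> nat \<Rightarrow> bool" where
  "k_primitive k \<eta> p \<longleftrightarrow> (\<forall>i j. (\<forall>m<k. \<eta> (i + int m) = \<eta> (j + int m)) \<longrightarrow> int p dvd (j - i))"

definition BPC :: "config pmf \<Rightarrow> bool" where
  "BPC \<nu> \<longleftrightarrow> (\<exists>\<eta> p. min_period \<eta> p \<and> \<nu> = translates_measure \<eta> p)"

definition kprim_BPC :: "nat \<Rightarrow> config pmf \<Rightarrow> bool" where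
  "kprim_BPC k \<nu> \<longleftrightarrow> (\<exists>\<eta> p. min_period \<eta> p \<and> k_primitive k \<eta> p \<and> \<nu> = translates_measure \<eta> p)"

definition proj :: "nat \<Rightarrow> config pmf \<Rightarrow> bool list \<Rightarrow> real" where
  "proj k \<nu> = (\<lambda>x. measure_pmf.prob \<nu> {\<eta>. map \<eta> [0..int k] = x})"

text \<open>Vertices: boolean lists of length k. Edge a theta b goes from a theta to theta b.\<close>
definition dB_edge :: "nat \<Rightarrow> bool list \<Rightarrow> bool list \<Rightarrow> bool" where
  "dB_edge k u v \<longleftrightarrow> length u = k \<and> length v = k \<and> tl u = butlast v"

text \<open>A cycle written as its list of vertices v_0,...,v_{p-1} (closed, no repeated vertex).
  Since G_k has at most one edge between two vertices, the vertex list determines the path.\<close>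
definition cycle_list :: "nat \<Rightarrow> bool list list \<Rightarrow> bool" where
  "cycle_list k vs \<longleftrightarrow> vs \<noteq> [] \<and> distinct vs \<and>
     (\<forall>i<length vs. dB_edge k (vs ! i) (vs ! (Suc i mod length vs)))"

definition cycles :: "nat \<Rightarrow> bool list list set set" where
  "cycles k = {{rotate j vs | j. True} | vs. cycle_list k vs}"

text \<open>Periodic configuration of a closed path: the first symbol of edge
  v_j (last v_{j+1}) is the first symbol of v_j.\<close>
definition path_config :: "bool list list \<Rightarrow> config" where
  "path_config vs = (\<lambda>i. hd (vs ! nat (i mod int (length vs))))"

definition nu_path :: "bool list list \<Rightarrow> config pmf" where
  "nu_path vs = translates_measure (path_config vs) (length vs)"

definition nu_cycle :: "bool list list set \<Rightarrow> config pmf" where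
  "nu_cycle C = nu_path (SOME vs. vs \<in> C)"

end

theory Submission
  imports Defs
begin

lemma finite_Xk: "finite (Xk k)"
proof -
  have "Xk k = {xs. set xs \<subseteq> (UNIV::bool set) \<and> length xs = Suc k}"
    by (auto simp: Xk_def)
  then show ?thesis using finite_lists_length_eq[of "UNIV::bool set" "Suc k"] by simp
qed

definition win :: "config \<Rightarrow> int \<Rightarrow> nat \<Rightarrow> bool list" where
  "win \<eta> i n = map (\<lambda>m. \<eta> (i + int m)) [0..<n]"

lemma map_upto_conv: "map f [0..int k] = map (\<lambda>m. f (int m)) [0..<Suc k]"
proof (rule nth_equalityI)
  show "length (map f [0..int k]) = length (map (\<lambda>m. f (int m)) [0..<Suc k])" by simp
next
  fix i assume "i < length (map f [0..int k])"
  then have "i \<le> k" by simp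
  then show "map f [0..int k] ! i = map (\<lambda>m. f (int m)) [0..<Suc k] ! i"
    by (simp add: nth_upto del: upt_Suc)
qed

lemma proj_pmf: "proj k \<nu> = pmf (map_pmf (\<lambda>\<eta>. map \<eta> [0..int k]) \<nu>)"
  by (rule ext) (simp add: proj_def pmf_map vimage_def)

lemma shift_shift: "shift a (shift b \<eta>) = shift (a + b) \<eta>"
  by (simp add: shift_def algebra_simps)

lemma shift_0[simp]: "shift 0 \<eta> = \<eta>"
  by (simp add: shift_def)

lemma period_mult: assumes "is_period \<eta> p" shows "\<eta> (y + int p * c) = \<eta> y"
proof -
  have P: "\<eta> (x + int p) = \<eta> x" for x using assms by (simp add: is_period_def)
  have N: "\<eta> (y + int p * int n) = \<eta> y" for y n
  proof (induction n)
    case (Suc n)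
    have "\<eta> (y + int p * int (Suc n)) = \<eta> ((y + int p * int n) + int p)" by (simp add: algebra_simps)
    also have "\<dots> = \<eta> y" using P[of "y + int p * int n"] Suc by simp
    finally show ?case .
  qed simp
  show ?thesis
  proof (cases "c \<ge> 0")
    case True then obtain n where "c = int n" using nonneg_int_cases by blast
    then show ?thesis using N by simp
  next
    case False
    define n where "n = nat (- c)"
    have c: "c = - int n" using False by (simp add: n_def)
    have "\<eta> (y + int p * c) = \<eta> ((y + int p * c) + int p * int n)" using N by simp
    also have "(y + int p * c) + int p * int n = y" by (simp add: c algebra_simps)
    finally show ?thesis .
  qed
qed

lemma period_mod: assumes "is_period \<eta> p" shows "\<eta> (y mod int p) = \<eta> y"
proof -
  have e: "y mod int p + int p * (y div int p) = y" by simp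
  have "\<eta> (y mod int p) = \<eta> (y mod int p + int p * (y div int p))"
    using period_mult[OF assms, of "y mod int p" "y div int p"] by simp
  then show ?thesis by (simp only: e)
qed

lemma period_shift: "is_period (shift j \<eta>) q \<longleftrightarrow> is_period \<eta> q"
proof
  assume a: "is_period (shift j \<eta>) q"
  show "is_period \<eta> q" unfolding is_period_def
  proof (intro conjI allI)
    show "0 < q" using a by (simp add: is_period_def)
    fix i
    have "shift j \<eta> ((i - j) + int q) = shift j \<eta> (i - j)" using a by (simp add: is_period_def)
    then show "\<eta> (i + int q) = \<eta> i" by (simp add: shift_def algebra_simps)
  qed
next
  assume a: "is_period \<eta> q"
  then show "is_period (shift j \<eta>) q"
    unfolding is_period_def shift_def by (metis add.commute add.left_commute)
qed

lemma min_period_unique: "min_period \<eta> p \<Longrightarrow> min_period \<eta> q \<Longrightarrow> p = q"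
  unfolding min_period_def is_period_def by (metis linorder_neqE_nat)

lemma min_period_shift: "min_period (shift j \<eta>) q \<longleftrightarrow> min_period \<eta> q"
  by (simp add: min_period_def period_shift)

lemma set_translates: "0 < p \<Longrightarrow> set_pmf (translates_measure \<eta> p) = (\<lambda>j. shift (int j) \<eta>) ` {0..<p}"
  by (simp add: translates_measure_def)

lemma translates_shift:
  assumes per: "is_period \<eta> p"
  shows "translates_measure (shift (int j) \<eta>) p = translates_measure \<eta> p"
proof -
  have p0: "0 < p" using per by (simp add: is_period_def)
  define f where "f = (\<lambda>i. (i + j) mod p)"
  have inj: "inj_on f {0..<p}"
  proof (rule inj_onI)
    have key: "a = b" if "a \<le> b" "b < p" "(a + j) mod p = (b + j) mod p" for a b
    proof -
      have "p dvd (b + j) - (a + j)" using that mod_eq_dvd_iff_nat[of "a + j" "b + j" p] by simp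
      then have "p dvd b - a" by simp
      show "a = b"
      proof (rule ccontr)
        assume "a \<noteq> b"
        then have "0 < b - a" using that by simp
        then have "p \<le> b - a" using \<open>p dvd b - a\<close> by (rule dvd_imp_le[rotated])
        then show False using that by simp
      qed
    qed
    fix a b assume "a \<in> {0..<p}" "b \<in> {0..<p}" "f a = f b"
    then show "a = b" using key[of a b] key[of b a] by (cases "a \<le> b") (auto simp: f_def)
  qed
  have img: "f ` {0..<p} = {0..<p}"
  proof -
    have "f ` {0..<p} \<subseteq> {0..<p}" using p0 by (auto simp: f_def)
    moreover have "card (f ` {0..<p}) = card {0..<p}" using card_image[OF inj] by simp
    ultimately show ?thesis by (simp add: card_subset_eq)
  qed
  have U: "map_pmf f (pmf_of_set {0..<p}) = pmf_of_set {0..<p}"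
    using map_pmf_of_set_inj[OF inj] p0 img by simp
  have sh: "shift (int i) (shift (int j) \<eta>) = shift (int (f i)) \<eta>" for i
  proof
    fix x
    have "shift (int i) (shift (int j) \<eta>) x = \<eta> (x + int (i + j))" by (simp add: shift_def algebra_simps)
    also have "\<dots> = \<eta> ((x + int (i + j)) mod int p)" using period_mod[OF per] by simp
    also have "\<dots> = \<eta> ((x + int ((i + j) mod p)) mod int p)" by (metis mod_add_right_eq of_nat_mod)
    also have "\<dots> = \<eta> (x + int (f i))" using period_mod[OF per] by (simp add: f_def)
    finally show "shift (int i) (shift (int j) \<eta>) x = shift (int (f i)) \<eta> x" by (simp add: shift_def)
  qed
  have "translates_measure (shift (int j) \<eta>) p = map_pmf (\<lambda>i. shift (int (f i)) \<eta>) (pmf_of_set {0..<p})"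
    unfolding translates_measure_def using sh by simp
  also have "\<dots> = map_pmf (\<lambda>i. shift (int i) \<eta>) (map_pmf f (pmf_of_set {0..<p}))"
    by (simp add: pmf.map_comp o_def)
  also have "\<dots> = translates_measure \<eta> p" by (simp add: U translates_measure_def)
  finally show ?thesis .
qed

lemma translates_trans_inv:
  assumes per: "is_period \<eta> p" shows "trans_inv (translates_measure \<eta> p)"
proof -
  have "map_pmf (shift 1) (translates_measure \<eta> p) = translates_measure (shift (int 1) \<eta>) p"
    unfolding translates_measure_def by (simp add: pmf.map_comp o_def shift_shift add.commute)
  then show ?thesis using translates_shift[OF per, of 1] by (simp add: trans_inv_def)
qed

lemma cycle_len: "cycle_list k vs \<Longrightarrow> i < length vs \<Longrightarrow> length (vs ! i) = k"
  unfolding cycle_list_def dB_edge_def by auto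

lemma cycle_p0: "cycle_list k vs \<Longrightarrow> 0 < length vs"
  unfolding cycle_list_def by auto

lemma cycle_step:
  assumes c: "cycle_list k vs" and m: "Suc m < k" and q: "q < length vs"
  shows "vs ! (Suc q mod length vs) ! m = vs ! q ! Suc m"
proof -
  have e: "dB_edge k (vs ! q) (vs ! (Suc q mod length vs))" using c q by (simp add: cycle_list_def)
  then have "tl (vs ! q) = butlast (vs ! (Suc q mod length vs))" and
    l: "length (vs ! (Suc q mod length vs)) = k" "length (vs ! q) = k"
    by (auto simp: dB_edge_def)
  then have "butlast (vs ! (Suc q mod length vs)) ! m = tl (vs ! q) ! m" by simp
  then show ?thesis using m l by (simp add: nth_butlast nth_tl)
qed

lemma nat_mod_suc: "0 < p \<Longrightarrow> nat ((i + 1) mod int p) = Suc (nat (i mod int p)) mod p"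
proof -
  assume p: "0 < p"
  have "(i + 1) mod int p = (i mod int p + 1) mod int p" by (simp add: mod_add_left_eq)
  also have "i mod int p + 1 = int (Suc (nat (i mod int p)))" using p by simp
  finally have "(i + 1) mod int p = int (Suc (nat (i mod int p)) mod p)" by (simp add: zmod_int)
  then show ?thesis by simp
qed

lemma W_pc:
  assumes c: "cycle_list k vs" and m: "m < k"
  shows "path_config vs (i + int m) = vs ! nat (i mod int (length vs)) ! m"
  using m
proof (induction m arbitrary: i)
  case 0
  have p: "0 < length vs" using cycle_p0[OF c] .
  have "nat (i mod int (length vs)) < length vs" using p by (simp add: nat_less_iff)
  then have "vs ! nat (i mod int (length vs)) \<noteq> []" using cycle_len[OF c] 0 by fastforce
  then show ?case by (simp add: path_config_def hd_conv_nth)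
next
  case (Suc m)
  have p: "0 < length vs" using cycle_p0[OF c] .
  have q: "nat (i mod int (length vs)) < length vs" using p by (simp add: nat_less_iff)
  have "path_config vs (i + int (Suc m)) = path_config vs ((i + 1) + int m)" by (simp add: algebra_simps)
  also have "\<dots> = vs ! nat ((i + 1) mod int (length vs)) ! m" using Suc by simp
  also have "\<dots> = vs ! (Suc (nat (i mod int (length vs))) mod length vs) ! m" using nat_mod_suc[OF p] by simp
  also have "\<dots> = vs ! nat (i mod int (length vs)) ! Suc m" using cycle_step[OF c Suc.prems q] .
  finally show ?case .
qed

lemma win_pc:
  assumes c: "cycle_list k vs"
  shows "win (path_config vs) i k = vs ! nat (i mod int (length vs))"
proof -
  have p: "0 < length vs" using cycle_p0[OF c] .
  have q: "nat (i mod int (length vs)) < length vs" using p by (simp add: nat_less_iff)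
  show ?thesis
    by (rule nth_equalityI) (auto simp: win_def cycle_len[OF c q] W_pc[OF c])
qed

lemma win_pc_nat:
  assumes c: "cycle_list k vs"
  shows "win (path_config vs) (int i) k = vs ! (i mod length vs)"
  using win_pc[OF c, of "int i"] by (metis nat_int zmod_int)

lemma pc_period: assumes c: "cycle_list k vs" shows "is_period (path_config vs) (length vs)"
  using cycle_p0[OF c] by (simp add: is_period_def path_config_def)

lemma win_eq: "win \<eta> i k = win \<eta> j k \<longleftrightarrow> (\<forall>m<k. \<eta> (i + int m) = \<eta> (j + int m))"
proof
  assume "win \<eta> i k = win \<eta> j k"
  then show "\<forall>m<k. \<eta> (i + int m) = \<eta> (j + int m)"
    unfolding win_def by (metis (no_types, lifting) add_0 diff_zero length_map length_upt nth_map nth_upt)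
qed (simp add: win_def)

lemma pc_kprim: assumes c: "cycle_list k vs"
  shows "k_primitive k (path_config vs) (length vs)"
  unfolding k_primitive_def
proof (intro allI impI)
  fix i j assume h: "\<forall>m<k. path_config vs (i + int m) = path_config vs (j + int m)"
  have p: "0 < length vs" using cycle_p0[OF c] .
  have "vs ! nat (i mod int (length vs)) = vs ! nat (j mod int (length vs))"
    using h win_pc[OF c, of i] win_pc[OF c, of j] win_eq by metis
  moreover have "nat (i mod int (length vs)) < length vs" "nat (j mod int (length vs)) < length vs"
    using p by (simp_all add: nat_less_iff)
  moreover have "distinct vs" using c by (simp add: cycle_list_def)
  ultimately have "nat (i mod int (length vs)) = nat (j mod int (length vs))"
    using nth_eq_iff_index_eq by blast
  moreover have "0 \<le> i mod int (length vs)" "0 \<le> j mod int (length vs)" using p by simp_all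
  ultimately have "i mod int (length vs) = j mod int (length vs)" by (simp add: eq_nat_nat_iff)
  then show "int (length vs) dvd j - i" by (metis mod_eq_dvd_iff)
qed

lemma pc_minper: assumes c: "cycle_list k vs" and k: "1 \<le> k"
  shows "min_period (path_config vs) (length vs)"
  unfolding min_period_def
proof (intro conjI allI impI)
  show "is_period (path_config vs) (length vs)" using pc_period[OF c] .
  fix q assume q: "0 < q \<and> q < length vs"
  show "\<not> is_period (path_config vs) q"
  proof
    assume per: "is_period (path_config vs) q"
    have "\<forall>m<k. path_config vs (0 + int m) = path_config vs (int q + int m)"
      using per unfolding is_period_def by (metis add.commute add_0)
    then have "int (length vs) dvd int q - 0" using pc_kprim[OF c] unfolding k_primitive_def by blast
    then have "length vs dvd q" by simp
    then show False using q nat_dvd_not_less by blast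
  qed
qed

lemma mod_id1: "0 < p \<Longrightarrow> (j + nat (i mod int p)) mod p = nat ((i + int j) mod int p)"
proof -
  assume p: "0 < p"
  have "int ((j + nat (i mod int p)) mod p) = (int j + i mod int p) mod int p"
    using p by (simp add: zmod_int)
  also have "\<dots> = (i + int j) mod int p" by (simp add: mod_add_right_eq add.commute)
  finally show ?thesis by (metis nat_int)
qed

lemma pc_rotate: assumes c: "cycle_list k vs"
  shows "path_config (rotate j vs) = shift (int j) (path_config vs)"
proof
  fix i
  have p: "0 < length vs" using cycle_p0[OF c] .
  have q: "nat (i mod int (length vs)) < length vs" using p by (simp add: nat_less_iff)
  show "path_config (rotate j vs) i = shift (int j) (path_config vs) i"
    unfolding path_config_def shift_def using q mod_id1[OF p, of j i] by (simp add: nth_rotate)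
qed

lemma cycle_rotate: assumes c: "cycle_list k vs" shows "cycle_list k (rotate j vs)"
proof -
  have p: "0 < length vs" using cycle_p0[OF c] .
  have E: "\<forall>i<length vs. dB_edge k (vs ! i) (vs ! (Suc i mod length vs))" using c by (simp add: cycle_list_def)
  have "dB_edge k (rotate j vs ! i) (rotate j vs ! (Suc i mod length vs))" if i: "i < length vs" for i
  proof -
    have a: "rotate j vs ! i = vs ! ((j + i) mod length vs)" using i by (simp add: nth_rotate)
    have b: "rotate j vs ! (Suc i mod length vs) = vs ! (Suc ((j + i) mod length vs) mod length vs)"
      using p by (simp add: nth_rotate mod_add_right_eq mod_Suc_eq)
    show ?thesis unfolding a b using E p by simp
  qed
  then show ?thesis using c by (simp add: cycle_list_def)
qed

lemma nu_path_rotate: assumes c: "cycle_list k vs" shows "nu_path (rotate j vs) = nu_path vs"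
  unfolding nu_path_def using pc_rotate[OF c] translates_shift[OF pc_period[OF c]] by simp

definition rclass :: "bool list list \<Rightarrow> bool list list set" where
  "rclass vs = {rotate j vs | j. True}"

lemma cycles_rclass: "cycles k = rclass ` {vs. cycle_list k vs}"
  by (auto simp: cycles_def rclass_def)

lemma rclass_self: "vs \<in> rclass vs"
  unfolding rclass_def by (metis (mono_tags, lifting) mem_Collect_eq rotate0 id_apply)

lemma rclass_eq: assumes "vs' \<in> rclass vs" shows "rclass vs' = rclass vs"
proof -
  obtain j where j: "vs' = rotate j vs" using assms by (auto simp: rclass_def)
  show ?thesis
  proof (cases "vs = []")
    case True then show ?thesis using j by (simp add: rclass_def)
  next
    case False
    define p where "p = length vs"
    have p: "0 < p" using False by (simp add: p_def)
    have "rotate i vs \<in> rclass vs'" for i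
    proof -
      define m where "m = i + p * j + p - j"
      have le: "j \<le> p * j" using p by simp
      have "m + j = i + p * j + p" unfolding m_def using le by linarith
      also have "\<dots> = i + p * (j + 1)" by (simp add: algebra_simps)
      finally have "m + j = i + p * (j + 1)" .
      then have "rotate m vs' = rotate (i + p * (j + 1)) vs" by (simp add: j rotate_rotate)
      also have "\<dots> = rotate i vs"
        by (metis p_def rotate_conv_mod mod_mult_self2)
      finally show ?thesis unfolding rclass_def by (metis (mono_tags, lifting) mem_Collect_eq)
    qed
    moreover have "rotate i vs' \<in> rclass vs" for i
      unfolding rclass_def j rotate_rotate by blast
    ultimately show ?thesis by (auto simp: rclass_def)
  qed
qed

lemma rclass_cycle: "cycle_list k vs \<Longrightarrow> vs' \<in> rclass vs \<Longrightarrow> cycle_list k vs'"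
  unfolding rclass_def using cycle_rotate by blast

lemma nu_cycle_rclass: assumes c: "cycle_list k vs" shows "nu_cycle (rclass vs) = nu_path vs"
proof -
  have "(SOME x. x \<in> rclass vs) \<in> rclass vs" using rclass_self by (metis someI)
  then obtain j where "(SOME x. x \<in> rclass vs) = rotate j vs" by (auto simp: rclass_def)
  then show ?thesis unfolding nu_cycle_def using nu_path_rotate[OF c] by simp
qed

definition edg :: "nat \<Rightarrow> bool list list \<Rightarrow> nat \<Rightarrow> bool list" where
  "edg k vs j = win (path_config vs) (int j) (Suc k)"

lemma take_win: "take k (win \<eta> i (Suc k)) = win \<eta> i k"
  by (simp add: win_def take_map)

lemma drop_win: "drop 1 (win \<eta> i (Suc k)) = win \<eta> (i + 1) k"
proof (rule nth_equalityI)
  show "length (drop 1 (win \<eta> i (Suc k))) = length (win \<eta> (i + 1) k)" by (simp add: win_def)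
  fix m assume "m < length (drop 1 (win \<eta> i (Suc k)))"
  then have m: "m < k" by (simp add: win_def)
  have "drop 1 (win \<eta> i (Suc k)) ! m = win \<eta> i (Suc k) ! Suc m"
    using m by (simp add: nth_drop win_def del: upt_Suc)
  also have "\<dots> = \<eta> (i + int (Suc m))" using m unfolding win_def by (simp del: upt_Suc)
  also have "\<dots> = win \<eta> (i + 1) k ! m" using m unfolding win_def by (simp add: algebra_simps)
  finally show "drop 1 (win \<eta> i (Suc k)) ! m = win \<eta> (i + 1) k ! m" .
qed

lemma len_win[simp]: "length (win \<eta> i n) = n"
  by (simp add: win_def)

lemma edg_len: "length (edg k vs j) = Suc k" by (simp add: edg_def)

lemma edg_Xk: "edg k vs j \<in> Xk k" by (simp add: Xk_def edg_len)

lemma edg_take: "cycle_list k vs \<Longrightarrow> take k (edg k vs j) = vs ! (j mod length vs)"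
  unfolding edg_def take_win by (rule win_pc_nat)

lemma edg_drop: "cycle_list k vs \<Longrightarrow> drop 1 (edg k vs j) = vs ! (Suc j mod length vs)"
  unfolding edg_def drop_win using win_pc_nat[of k vs "Suc j"] by (simp add: add.commute)

lemma list_split_last: "length x = Suc k \<Longrightarrow> 1 \<le> k \<Longrightarrow> x = take k x @ [last (drop 1 x)]"
proof -
  assume l: "length x = Suc k" and k: "1 \<le> k"
  have d: "drop k x = [x ! k]"
    using l by (metis Cons_nth_drop_Suc diff_Suc_1 drop_all le_refl length_drop lessI)
  have "last (drop 1 x) = drop 1 x ! (length (drop 1 x) - 1)"
    using l k by (intro last_conv_nth) auto
  also have "\<dots> = x ! k" using l k by (simp add: nth_drop)
  finally show ?thesis using d by (metis append_take_drop_id)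
qed

lemma list_split_hd: "length x = Suc k \<Longrightarrow> x = hd x # drop 1 x"
  by (cases x) auto

lemma edg_form: assumes c: "cycle_list k vs" and k: "1 \<le> k"
  shows "edg k vs j = vs ! (j mod length vs) @ [last (vs ! (Suc j mod length vs))]"
  using list_split_last[OF edg_len k, of vs j] edg_take[OF c] edg_drop[OF c] by simp

lemma edg_mod: "cycle_list k vs \<Longrightarrow> 1 \<le> k \<Longrightarrow> edg k vs (j mod length vs) = edg k vs j"
  using edg_form by (simp add: mod_Suc_eq)

lemma edg_inj: assumes c: "cycle_list k vs"
  shows "inj_on (edg k vs) {0..<length vs}"
proof (rule inj_onI)
  fix a b assume a: "a \<in> {0..<length vs}" and b: "b \<in> {0..<length vs}" and e: "edg k vs a = edg k vs b"
  then have "vs ! a = vs ! b" using edg_take[OF c, of a] edg_take[OF c, of b] by simp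
  then show "a = b" using a b c nth_eq_iff_index_eq by (auto simp: cycle_list_def)
qed

definition Eset :: "nat \<Rightarrow> bool list list \<Rightarrow> bool list set" where
  "Eset k vs = edg k vs ` {0..<length vs}"

lemma Eset_card: "cycle_list k vs \<Longrightarrow> card (Eset k vs) = length vs"
  unfolding Eset_def using edg_inj card_image by fastforce

lemma Eset_Xk: "Eset k vs \<subseteq> Xk k"
  unfolding Eset_def using edg_Xk by auto

lemma Eset_mem: "cycle_list k vs \<Longrightarrow> 1 \<le> k \<Longrightarrow> edg k vs j \<in> Eset k vs"
  unfolding Eset_def using edg_mod[of k vs j] cycle_p0[of k vs]
  by (metis atLeastLessThan_iff image_eqI mod_less_divisor zero_le)

lemma g_shift: "map (shift (int j) \<eta>) [0..int k] = win \<eta> (int j) (Suc k)"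
  unfolding map_upto_conv win_def shift_def by (simp add: add.commute)

lemma proj_nu_path: assumes c: "cycle_list k vs"
  shows "proj k (nu_path vs) = (\<lambda>x. if x \<in> Eset k vs then 1 / real (length vs) else 0)"
proof -
  have p: "0 < length vs" using cycle_p0[OF c] .
  have "map_pmf (\<lambda>\<eta>. map \<eta> [0..int k]) (nu_path vs)
      = map_pmf (edg k vs) (pmf_of_set {0..<length vs})"
    unfolding nu_path_def translates_measure_def pmf.map_comp o_def g_shift edg_def ..
  also have "\<dots> = pmf_of_set (Eset k vs)"
    unfolding Eset_def using map_pmf_of_set_inj[OF edg_inj[OF c]] p by simp
  finally have "proj k (nu_path vs) = pmf (pmf_of_set (Eset k vs))" by (simp add: proj_pmf)
  moreover have "Eset k vs \<noteq> {}" "finite (Eset k vs)" using p by (auto simp: Eset_def)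
  ultimately show ?thesis using Eset_card[OF c] by (intro ext) (simp add: indicator_def)
qed

lemma trans_inv_iter: "trans_inv \<nu> \<Longrightarrow> map_pmf (shift (int t)) \<nu> = \<nu>"
proof (induction t)
  case 0 then show ?case by (simp add: id_def[symmetric])
next
  case (Suc t)
  have "shift (int (Suc t)) = shift 1 \<circ> shift (int t)" by (auto simp: shift_shift add.commute)
  then have "map_pmf (shift (int (Suc t))) \<nu> = map_pmf (shift 1) (map_pmf (shift (int t)) \<nu>)"
    by (simp add: pmf.map_comp)
  also have "\<dots> = \<nu>" using Suc by (simp add: trans_inv_def)
  finally show ?case .
qed

lemma proj_Mk: assumes ti: "trans_inv \<nu>" shows "proj k \<nu> \<in> Mk k"
proof -
  define g where "g = (\<lambda>\<eta>::config. map \<eta> [0..int k])"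
  define M where "M = map_pmf g \<nu>"
  have P: "proj k \<nu> = pmf M" by (simp add: proj_pmf M_def g_def)
  have gX: "g \<eta> \<in> Xk k" for \<eta> by (simp add: g_def Xk_def)
  have sM: "set_pmf M \<subseteq> Xk k" using gX by (auto simp: M_def)
  have prob: "prob_on_Xk k (proj k \<nu>)"
    unfolding prob_on_Xk_def P
  proof (intro conjI allI impI)
    show "sum (pmf M) (Xk k) = 1" using sum_pmf_eq_1[OF finite_Xk sM] .
    fix x assume "pmf M x \<noteq> 0"
    then show "x \<in> Xk k" using sM by (auto simp: set_pmf_eq)
  qed simp
  have key: "marg k (proj k \<nu>) A t y = measure \<nu> {\<eta>. \<forall>i\<in>A. \<eta> (int i) = y i}"
    if A: "A \<subseteq> {0..k}" and At: "(\<lambda>i. i + t) ` A \<subseteq> {0..k}" for A t y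
  proof -
    define S where "S = {x \<in> Xk k. \<forall>i\<in>A. x ! (i + t) = y i}"
    have "marg k (proj k \<nu>) A t y = sum (pmf M) S" by (simp add: marg_def P S_def)
    also have "\<dots> = measure M S"
      by (rule measure_measure_pmf_finite[symmetric]) (simp add: S_def finite_Xk)
    also have "\<dots> = measure \<nu> (g -` S)" by (simp add: M_def)
    also have "g -` S = shift (int t) -` {\<eta>. \<forall>i\<in>A. \<eta> (int i) = y i}"
    proof -
      have "g \<eta> ! (i + t) = \<eta> (int i + int t)" if "i \<in> A" for \<eta> i
      proof -
        have "i + t \<le> k" using At that by auto
        then show ?thesis by (simp add: g_def nth_upto)
      qed
      then show ?thesis unfolding S_def using gX by (auto simp: shift_def)
    qed
    also have "measure \<nu> \<dots> = measure (map_pmf (shift (int t)) \<nu>) {\<eta>. \<forall>i\<in>A. \<eta> (int i) = y i}"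
      by simp
    also have "\<dots> = measure \<nu> {\<eta>. \<forall>i\<in>A. \<eta> (int i) = y i}" using trans_inv_iter[OF ti] by simp
    finally show ?thesis .
  qed
  have "LTI k (proj k \<nu>)"
    unfolding LTI_def
  proof (intro allI impI)
    fix A t y assume h: "A \<subseteq> {0..k} \<and> (\<lambda>i. i + t) ` A \<subseteq> {0..k}"
    then have "(\<lambda>i. i + 0) ` A \<subseteq> {0..k}" by auto
    then show "marg k (proj k \<nu>) A t y = marg k (proj k \<nu>) A 0 y"
      using key[of A t y] key[of A 0 y] h by simp
  qed
  then show ?thesis using prob by (simp add: Mk_def)
qed

lemma sum_two: "a \<noteq> b \<Longrightarrow> sum f {a, b} = f a + f b" by simp

lemma set_in: assumes v: "length v = k"
  shows "{x \<in> Xk k. \<forall>i\<in>{0..<k}. x ! (i + 1) = v ! i} = {True # v, False # v}"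
proof (intro set_eqI iffI)
  fix x assume x: "x \<in> {x \<in> Xk k. \<forall>i\<in>{0..<k}. x ! (i + 1) = v ! i}"
  then have l: "length x = Suc k" by (simp add: Xk_def)
  have "drop 1 x = v" using x v by (intro nth_equalityI) (auto simp: Xk_def nth_drop)
  then have "x = hd x # v" using list_split_hd[OF l] by simp
  then show "x \<in> {True # v, False # v}" by (cases "hd x") auto
next
  fix x assume "x \<in> {True # v, False # v}"
  then show "x \<in> {x \<in> Xk k. \<forall>i\<in>{0..<k}. x ! (i + 1) = v ! i}" using v by (auto simp: Xk_def)
qed

lemma set_out: assumes v: "length v = k"
  shows "{x \<in> Xk k. \<forall>i\<in>{0..<k}. x ! (i + 0) = v ! i} = {v @ [True], v @ [False]}"
proof (intro set_eqI iffI)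
  fix x assume x: "x \<in> {x \<in> Xk k. \<forall>i\<in>{0..<k}. x ! (i + 0) = v ! i}"
  then have l: "length x = Suc k" by (simp add: Xk_def)
  have "take k x = v" using x v l by (intro nth_equalityI) (auto simp: Xk_def)
  moreover have "x = take k x @ [x ! k]" using l
    by (metis Cons_nth_drop_Suc append_take_drop_id drop_all le_refl lessI)
  ultimately have "x = v @ [x ! k]" by simp
  then show "x \<in> {v @ [True], v @ [False]}" by (cases "x ! k") auto
next
  fix x assume "x \<in> {v @ [True], v @ [False]}"
  then show "x \<in> {x \<in> Xk k. \<forall>i\<in>{0..<k}. x ! (i + 0) = v ! i}" using v by (auto simp: Xk_def nth_append)
qed

lemma circulation:
  assumes M: "\<mu> \<in> Mk k" and v: "length v = k"
  shows "\<mu> (v @ [True]) + \<mu> (v @ [False]) = \<mu> (True # v) + \<mu> (False # v)"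
proof -
  have L: "LTI k \<mu>" using M by (simp add: Mk_def)
  have A: "{0..<k} \<subseteq> {0..k}" "(\<lambda>i. i + 1) ` {0..<k} \<subseteq> {0..k}" by auto
  have "marg k \<mu> {0..<k} 1 (\<lambda>i. v ! i) = marg k \<mu> {0..<k} 0 (\<lambda>i. v ! i)"
    using L A unfolding LTI_def by blast
  then show ?thesis unfolding marg_def set_in[OF v] set_out[OF v] by simp
qed

lemma marg_lin: "marg k (\<lambda>x. a * f x + b * g x) A t y = a * marg k f A t y + b * marg k g A t y"
  by (simp add: marg_def sum.distrib sum_distrib_left)

lemma LTI_lin: assumes "LTI k f" "LTI k g" shows "LTI k (\<lambda>x. a * f x + b * g x)"
  unfolding LTI_def marg_lin
proof (intro allI impI)
  fix A t y assume h: "A \<subseteq> {0..k} \<and> (\<lambda>i. i + t) ` A \<subseteq> {0..k}"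
  have "marg k f A t y = marg k f A 0 y" "marg k g A t y = marg k g A 0 y"
    using assms h unfolding LTI_def by blast+
  then show "a * marg k f A t y + b * marg k g A t y = a * marg k f A 0 y + b * marg k g A 0 y" by simp
qed

lemma suc_mod_cancel: "0 < p \<Longrightarrow> Suc i mod p = Suc j mod p \<Longrightarrow> i mod p = j mod p"
proof -
  assume p: "0 < p" and e: "Suc i mod p = Suc j mod p"
  have r: "x mod p = (Suc x mod p + (p - 1)) mod p" for x
  proof -
    have "Suc x + (p - 1) = x + p" using p by simp
    then have "x mod p = (Suc x + (p - 1)) mod p" by simp
    also have "\<dots> = (Suc x mod p + (p - 1)) mod p" by (simp add: mod_add_left_eq)
    finally show ?thesis .
  qed
  have "i mod p = (Suc i mod p + (p - 1)) mod p" by (rule r)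
  also have "\<dots> = (Suc j mod p + (p - 1)) mod p" by (simp only: e)
  also have "\<dots> = j mod p" by (rule r[symmetric])
  finally show ?thesis .
qed

lemma edg_hd: assumes c: "cycle_list k vs"
  shows "edg k vs j = hd (edg k vs j) # vs ! (Suc j mod length vs)"
  using list_split_hd[OF edg_len, of k vs j] edg_drop[OF c, of j] by simp

lemma edg_last: assumes c: "cycle_list k vs" and k: "1 \<le> k"
  shows "edg k vs j = vs ! (j mod length vs) @ [last (drop 1 (edg k vs j))]"
  using list_split_last[OF edg_len k, of vs j] edg_take[OF c, of j] by simp

lemma Eset_obtain: "x \<in> Eset k vs \<Longrightarrow> \<exists>i<length vs. x = edg k vs i"
  unfolding Eset_def by auto

lemma in_unique: assumes c: "cycle_list k vs" and k: "1 \<le> k"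
  and x: "c # vs ! (Suc j mod length vs) \<in> Eset k vs"
  shows "c # vs ! (Suc j mod length vs) = edg k vs j"
proof -
  have p: "0 < length vs" using cycle_p0[OF c] .
  obtain i where i: "i < length vs" "c # vs ! (Suc j mod length vs) = edg k vs i"
    using Eset_obtain[OF x] by blast
  have "vs ! (Suc i mod length vs) = vs ! (Suc j mod length vs)"
    using edg_drop[OF c, of i] i(2) by (metis drop_Suc_Cons drop_0 One_nat_def)
  then have "Suc i mod length vs = Suc j mod length vs"
    using c p by (simp add: cycle_list_def nth_eq_iff_index_eq)
  then have "i mod length vs = j mod length vs" using suc_mod_cancel p by blast
  then have "edg k vs i = edg k vs j" using edg_mod[OF c k] by metis
  then show ?thesis using i by simp
qed

lemma out_unique: assumes c: "cycle_list k vs" and k: "1 \<le> k"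
  and x: "vs ! (Suc j mod length vs) @ [b] \<in> Eset k vs"
  shows "vs ! (Suc j mod length vs) @ [b] = edg k vs (Suc j)"
proof -
  have p: "0 < length vs" using cycle_p0[OF c] .
  obtain i where i: "i < length vs" "vs ! (Suc j mod length vs) @ [b] = edg k vs i"
    using Eset_obtain[OF x] by blast
  have l: "length (vs ! (Suc j mod length vs)) = k" using cycle_len[OF c] p by simp
  have "vs ! (i mod length vs) = vs ! (Suc j mod length vs)"
    using edg_take[OF c, of i] i(2) l by (metis append_eq_conv_conj)
  then have "i mod length vs = Suc j mod length vs"
    using c p by (simp add: cycle_list_def nth_eq_iff_index_eq)
  then have "edg k vs i = edg k vs (Suc j)" using edg_mod[OF c k] by metis
  then show ?thesis using i by simp
qed

lemma cyc_unique:
  assumes c: "cycle_list k vs" and k: "1 \<le> k" and M: "a \<in> Mk k"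
    and supp: "\<And>x. a x \<noteq> 0 \<Longrightarrow> x \<in> Eset k vs"
  shows "a = proj k (nu_path vs)"
proof -
  have p: "0 < length vs" using cycle_p0[OF c] .
  let ?e = "edg k vs"
  have step: "a (?e j) = a (?e (Suc j))" for j
  proof -
    define v where "v = vs ! (Suc j mod length vs)"
    have lv: "length v = k" using cycle_len[OF c] p by (simp add: v_def)
    define h where "h = hd (?e j)"
    have ej: "?e j = h # v" using edg_hd[OF c, of j] by (simp add: h_def v_def)
    have o1: "a ((\<not> h) # v) = 0"
    proof (rule ccontr)
      assume "a ((\<not> h) # v) \<noteq> 0"
      then have "(\<not> h) # v = ?e j" using in_unique[OF c k] supp by (simp add: v_def)
      then show False using ej by simp
    qed
    define b where "b = last (drop 1 (?e (Suc j)))"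
    have es: "?e (Suc j) = v @ [b]" using edg_last[OF c k, of "Suc j"] by (simp add: b_def v_def)
    have o2: "a (v @ [\<not> b]) = 0"
    proof (rule ccontr)
      assume "a (v @ [\<not> b]) \<noteq> 0"
      then have "v @ [\<not> b] = ?e (Suc j)" using out_unique[OF c k] supp by (simp add: v_def)
      then show False using es by simp
    qed
    have "a (v @ [True]) + a (v @ [False]) = a (True # v) + a (False # v)"
      using circulation[OF M lv] .
    moreover have "a (True # v) + a (False # v) = a (h # v)" using o1 by (cases h) simp_all
    moreover have "a (v @ [True]) + a (v @ [False]) = a (v @ [b])" using o2 by (cases b) simp_all
    ultimately show ?thesis using ej es by simp
  qed
  have const: "a (?e j) = a (?e 0)" for j
    by (induction j) (simp_all add: step[symmetric])
  have "1 = sum a (Xk k)" using M by (simp add: Mk_def prob_on_Xk_def)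
  also have "\<dots> = sum a (Eset k vs)"
    using Eset_Xk finite_Xk supp by (intro sum.mono_neutral_right) (auto, blast)
  also have "\<dots> = (\<Sum>j\<in>{0..<length vs}. a (?e j))"
    unfolding Eset_def by (rule sum.reindex[OF edg_inj[OF c], unfolded o_def])
  also have "\<dots> = (\<Sum>j\<in>{0..<length vs}. a (?e 0))" by (rule sum.cong[OF refl const])
  also have "\<dots> = real (length vs) * a (?e 0)" by simp
  finally have a0: "a (?e 0) = 1 / real (length vs)" using p by (simp add: field_simps)
  show ?thesis
  proof
    fix x
    show "a x = proj k (nu_path vs) x"
    proof (cases "x \<in> Eset k vs")
      case True
      then obtain i where "x = ?e i" using Eset_obtain by blast
      then show ?thesis using True const a0 proj_nu_path[OF c] by simp
    next
      case False
      then show ?thesis using supp proj_nu_path[OF c] by fastforce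
    qed
  qed
qed

lemma finite_len: "finite {v :: bool list. length v = k}"
proof -
  have "{v :: bool list. length v = k} = {xs. set xs \<subseteq> (UNIV::bool set) \<and> length xs = k}" by auto
  then show ?thesis using finite_lists_length_eq[of "UNIV::bool set" k] by simp
qed

lemma Mk_nonneg: "\<mu> \<in> Mk k \<Longrightarrow> 0 \<le> \<mu> x"
  by (simp add: Mk_def prob_on_Xk_def)

lemma find_cycle:
  assumes M: "\<mu> \<in> Mk k" and k: "1 \<le> k"
  shows "\<exists>vs. cycle_list k vs \<and> (\<forall>x\<in>Eset k vs. 0 < \<mu> x)"
proof -
  have nn: "0 \<le> \<mu> x" for x using Mk_nonneg[OF M] .
  have s1: "sum \<mu> (Xk k) = 1" using M by (simp add: Mk_def prob_on_Xk_def)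
  obtain x0 where x0: "x0 \<in> Xk k" "0 < \<mu> x0"
  proof (rule ccontr)
    assume "\<not> thesis"
    then have "\<forall>x\<in>Xk k. \<mu> x \<le> 0" using that by force
    then have "sum \<mu> (Xk k) \<le> 0" by (simp add: sum_nonpos)
    then show False using s1 by simp
  qed
  define P where "P = (\<lambda>v. length v = k \<and> (\<exists>a. 0 < \<mu> (a # v)))"
  have out: "\<exists>b. 0 < \<mu> (v @ [b])" if "P v" for v
  proof -
    obtain a where a: "0 < \<mu> (a # v)" and l: "length v = k" using \<open>P v\<close> by (auto simp: P_def)
    have "0 < \<mu> (True # v) + \<mu> (False # v)" using a nn[of "True # v"] nn[of "False # v"] by (cases a) auto
    then have "0 < \<mu> (v @ [True]) + \<mu> (v @ [False])" using circulation[OF M l] by simp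
    then show ?thesis using nn[of "v @ [True]"] nn[of "v @ [False]"] by (metis add_nonpos_nonpos not_less)
  qed
  define s where "s = (\<lambda>v. tl v @ [SOME b. 0 < \<mu> (v @ [b])])"
  have sP: "P (s v) \<and> 0 < \<mu> (v @ [last (s v)]) \<and> dB_edge k v (s v)" if "P v" for v
  proof -
    have b: "0 < \<mu> (v @ [SOME b. 0 < \<mu> (v @ [b])])" using out[OF that] by (rule someI_ex)
    have l: "length v = k" using that by (simp add: P_def)
    then have ne: "v \<noteq> []" using k by auto
    have "hd v # s v = v @ [SOME b. 0 < \<mu> (v @ [b])]" using ne by (simp add: s_def)
    then have "P (s v)" using b l k unfolding P_def by (metis One_nat_def length_append_singleton length_tl
          s_def Suc_pred le_simps(3) length_greater_0_conv ne)
    moreover have "dB_edge k v (s v)" using l ne k by (simp add: dB_edge_def s_def)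
    ultimately show ?thesis using b by (simp add: s_def)
  qed
  define v0 where "v0 = drop 1 x0"
  have "P v0"
  proof -
    have l: "length x0 = Suc k" using x0 by (simp add: Xk_def)
    have "x0 = hd x0 # v0" using list_split_hd[OF l] by (simp add: v0_def)
    then show ?thesis using x0 l by (auto simp: P_def v0_def) (metis)
  qed
  define f where "f n = (s ^^ n) v0" for n
  have fP: "P (f n)" for n by (induction n) (auto simp: f_def \<open>P v0\<close> sP)
  have fS: "f (Suc n) = s (f n)" for n by (simp add: f_def)
  have "range f \<subseteq> {v. length v = k}" using fP by (auto simp: P_def)
  then have "finite (range f)" using finite_len finite_subset by blast
  then have "\<not> inj f" using range_inj_infinite by blast
  then obtain a b where ab: "a \<noteq> b" "f a = f b" unfolding inj_def by blast
  define Q where "Q = (\<lambda>j. \<exists>i<j. f i = f j)"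
  have "Q (max a b)"
  proof (cases "a < b")
    case True then show ?thesis using ab unfolding Q_def by (auto simp: max_def)
  next
    case False then have "b < a" using ab by simp
    then show ?thesis using ab unfolding Q_def by (auto simp: max_def intro!: exI[of _ b])
  qed
  define j0 where "j0 = (LEAST j. Q j)"
  have Qj0: "Q j0" unfolding j0_def by (rule LeastI) fact
  then obtain i0 where i0: "i0 < j0" "f i0 = f j0" unfolding Q_def by blast
  have minl: "f a \<noteq> f b" if "a < b" "b < j0" for a b
  proof
    assume "f a = f b"
    then have "Q b" unfolding Q_def using that by blast
    then show False using not_less_Least[of b Q] that unfolding j0_def by blast
  qed
  define vs where "vs = map f [i0..<j0]"
  define p where "p = j0 - i0"
  have lp: "length vs = p" and p0: "0 < p" using i0 by (simp_all add: vs_def p_def)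
  have vsn: "vs ! m = f (i0 + m)" if "m < p" for m using that by (simp add: vs_def p_def)
  have vsS: "vs ! (Suc m mod p) = f (i0 + Suc m)" if "m < p" for m
  proof (cases "Suc m < p")
    case True then show ?thesis using vsn by simp
  next
    case False
    then have "Suc m = p" using that by simp
    then show ?thesis using vsn[OF p0] i0 by (simp add: p_def)
  qed
  have dist: "distinct vs"
    unfolding distinct_conv_nth lp
  proof (intro allI impI)
    fix m n assume h: "m < p" "n < p" "m \<noteq> n"
    have hh: "i0 + m < j0" "i0 + n < j0" using h by (simp_all add: p_def)
    show "vs ! m \<noteq> vs ! n"
    proof (cases "m < n")
      case True then show ?thesis using minl[of "i0 + m" "i0 + n"] h hh vsn by simp
    next
      case False then have "n < m" using h by simp
      then show ?thesis using minl[of "i0 + n" "i0 + m"] h hh vsn by simp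
    qed
  qed
  have cyc: "cycle_list k vs"
    unfolding cycle_list_def
  proof (intro conjI allI impI)
    show "vs \<noteq> []" using lp p0 by auto
    show "distinct vs" by (rule dist)
    fix i assume "i < length vs"
    then show "dB_edge k (vs ! i) (vs ! (Suc i mod length vs))"
      using vsn vsS sP fP fS lp by simp
  qed
  have pos: "\<forall>x\<in>Eset k vs. 0 < \<mu> x"
  proof
    fix x assume "x \<in> Eset k vs"
    then obtain i where i: "i < length vs" "x = edg k vs i" using Eset_obtain by blast
    then have "x = f (i0 + i) @ [last (f (Suc (i0 + i)))]"
      using edg_form[OF cyc k, of i] vsn vsS lp by simp
    then show "0 < \<mu> x" using sP fP fS by simp
  qed
  show ?thesis using cyc pos by blast
qed

definition supp :: "nat \<Rightarrow> (bool list \<Rightarrow> real) \<Rightarrow> bool list set" where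
  "supp k \<mu> = {x \<in> Xk k. \<mu> x \<noteq> 0}"

lemma pi_Mk: "cycle_list k vs \<Longrightarrow> proj k (nu_path vs) \<in> Mk k"
  unfolding nu_path_def by (intro proj_Mk translates_trans_inv pc_period)

lemma Mk_sum: "\<mu> \<in> Mk k \<Longrightarrow> sum \<mu> (Xk k) = 1"
  by (simp add: Mk_def prob_on_Xk_def)

lemma Mk_out: "\<mu> \<in> Mk k \<Longrightarrow> x \<notin> Xk k \<Longrightarrow> \<mu> x = 0"
  by (auto simp: Mk_def prob_on_Xk_def)

lemma step:
  assumes M: "\<mu> \<in> Mk k" and k: "1 \<le> k"
  shows "\<exists>vs. cycle_list k vs \<and> (\<mu> = proj k (nu_path vs) \<or>
     (\<exists>t \<mu>'. 0 < t \<and> t < 1 \<and> \<mu>' \<in> Mk k \<and> \<mu> = (\<lambda>x. t * proj k (nu_path vs) x + (1 - t) * \<mu>' x)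
        \<and> card (supp k \<mu>') < card (supp k \<mu>)))"
proof -
  obtain vs where c: "cycle_list k vs" and pos: "\<forall>x\<in>Eset k vs. 0 < \<mu> x"
    using find_cycle[OF M k] by blast
  define E where "E = Eset k vs"
  define p where "p = length vs"
  have p0: "0 < p" using cycle_p0[OF c] by (simp add: p_def)
  define \<pi> where "\<pi> = proj k (nu_path vs)"
  have \<pi>M: "\<pi> \<in> Mk k" using pi_Mk[OF c] by (simp add: \<pi>_def)
  have \<pi>v: "\<pi> x = (if x \<in> E then 1 / real p else 0)" for x
    using proj_nu_path[OF c] by (simp add: \<pi>_def E_def p_def)
  have Ef: "finite E" "E \<noteq> {}" using p0 by (auto simp: E_def Eset_def p_def)
  define c0 where "c0 = Min (\<mu> ` E)"
  have c0le: "c0 \<le> \<mu> x" if "x \<in> E" for x using Ef that by (simp add: c0_def)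
  have "c0 \<in> \<mu> ` E" unfolding c0_def using Ef by (intro Min_in) auto
  then obtain x1 where x1: "x1 \<in> E" "\<mu> x1 = c0" by auto
  have c0p: "0 < c0" using x1 pos unfolding E_def by metis
  define t where "t = c0 * real p"
  have t0: "0 < t" using c0p p0 by (simp add: t_def)
  define d where "d x = \<mu> x - t * \<pi> x" for x
  have dnn: "0 \<le> d x" for x
  proof (cases "x \<in> E")
    case True then show ?thesis using c0le[OF True] p0 by (simp add: d_def \<pi>v t_def)
  next
    case False then show ?thesis using Mk_nonneg[OF M] by (simp add: d_def \<pi>v)
  qed
  have sd: "sum d (Xk k) = 1 - t"
  proof -
    have "sum d (Xk k) = sum \<mu> (Xk k) - t * sum \<pi> (Xk k)"
      unfolding d_def by (simp add: sum_subtractf sum_distrib_left)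
    then show ?thesis using Mk_sum[OF M] Mk_sum[OF \<pi>M] by simp
  qed
  have t1: "t \<le> 1" using sum_nonneg[of "Xk k" d] dnn sd by simp
  show ?thesis
  proof (cases "t = 1")
    case True
    have "\<forall>x\<in>Xk k. d x = 0"
      using sum_nonneg_eq_0_iff[OF finite_Xk[of k], of d] dnn sd True by simp
    have "\<mu> = \<pi>"
    proof
      fix x show "\<mu> x = \<pi> x"
      proof (cases "x \<in> Xk k")
        case True
        then have "d x = 0" using \<open>\<forall>x\<in>Xk k. d x = 0\<close> by blast
        then show ?thesis using \<open>t = 1\<close> by (simp add: d_def)
      next
        case False then show ?thesis using Mk_out[OF M] Mk_out[OF \<pi>M] by simp
      qed
    qed
    then show ?thesis using c by (auto simp: \<pi>_def)
  next
    case False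
    then have tl1: "t < 1" using t1 by simp
    define \<mu>' where "\<mu>' x = (1 / (1 - t)) * \<mu> x + (- t / (1 - t)) * \<pi> x" for x
    have \<mu>'d: "\<mu>' x = d x / (1 - t)" for x
    proof -
      have "(1 / (1 - t)) * \<mu> x + (- t / (1 - t)) * \<pi> x = (\<mu> x - t * \<pi> x) / (1 - t)"
        using tl1 by (simp add: diff_divide_distrib)
      then show ?thesis by (simp add: \<mu>'_def d_def)
    qed
    have LT: "LTI k \<mu>'" unfolding \<mu>'_def[abs_def]
      using M \<pi>M by (intro LTI_lin) (simp_all add: Mk_def)
    have out': "\<mu>' x = 0" if "x \<notin> Xk k" for x
      using Mk_out[OF M that] Mk_out[OF \<pi>M that] by (simp add: \<mu>'_def)
    have "prob_on_Xk k \<mu>'" unfolding prob_on_Xk_def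
    proof (intro conjI allI impI)
      show "0 \<le> \<mu>' x" for x using dnn[of x] tl1 by (simp add: \<mu>'d)
      show "\<mu>' x \<noteq> 0 \<Longrightarrow> x \<in> Xk k" for x using out' by blast
      have "sum \<mu>' (Xk k) = sum d (Xk k) / (1 - t)"
        unfolding \<mu>'d by (rule sum_divide_distrib[symmetric])
      then show "sum \<mu>' (Xk k) = 1" using sd tl1 by simp
    qed
    then have M': "\<mu>' \<in> Mk k" using LT by (simp add: Mk_def)
    have eq: "\<mu> = (\<lambda>x. t * \<pi> x + (1 - t) * \<mu>' x)"
    proof
      fix x
      have "(1 - t) * \<mu>' x = d x" using tl1 by (simp add: \<mu>'d)
      then show "\<mu> x = t * \<pi> x + (1 - t) * \<mu>' x" by (simp add: d_def)
    qed
    have sub: "supp k \<mu>' \<subseteq> supp k \<mu>"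
    proof
      fix x assume x: "x \<in> supp k \<mu>'"
      have "\<mu> x \<noteq> 0"
      proof
        assume z: "\<mu> x = 0"
        then have "x \<notin> E" using pos by (auto simp: E_def)
        then have "\<mu>' x = 0" using z by (simp add: \<mu>'_def \<pi>v)
        then show False using x by (simp add: supp_def)
      qed
      then show "x \<in> supp k \<mu>" using x by (simp add: supp_def)
    qed
    have x1X: "x1 \<in> Xk k" using x1 Eset_Xk by (auto simp: E_def)
    have "x1 \<in> supp k \<mu>" using x1 c0p x1X by (simp add: supp_def)
    moreover have "x1 \<notin> supp k \<mu>'"
      using x1 p0 by (simp add: supp_def \<mu>'d d_def \<pi>v t_def)
    ultimately have "supp k \<mu>' \<subset> supp k \<mu>" using sub by blast
    then have "card (supp k \<mu>') < card (supp k \<mu>)"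
      by (rule psubset_card_mono[rotated]) (simp add: supp_def finite_Xk)
    then show ?thesis using c t0 tl1 M' eq by (auto simp: \<pi>_def)
  qed
qed

lemma mix_join:
  "join_pmf (bind_pmf B (\<lambda>b. if b then return_pmf \<nu>1 else W2))
   = bind_pmf B (\<lambda>b. if b then \<nu>1 else join_pmf W2)"
  unfolding join_eq_bind_pmf bind_assoc_pmf
  by (rule bind_pmf_cong) (simp_all add: bind_return_pmf)

lemma mix_proj:
  assumes "0 \<le> t" "t \<le> 1"
  shows "proj k (join_pmf (bind_pmf (bernoulli_pmf t) (\<lambda>b. if b then return_pmf \<nu>1 else W2))) x
       = t * proj k \<nu>1 x + (1 - t) * proj k (join_pmf W2) x"
proof -
  define g where "g = (\<lambda>\<eta>::config. map \<eta> [0..int k])"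
  have "proj k (join_pmf (bind_pmf (bernoulli_pmf t) (\<lambda>b. if b then return_pmf \<nu>1 else W2))) x
      = pmf (bind_pmf (bernoulli_pmf t) (\<lambda>b. map_pmf g (if b then \<nu>1 else join_pmf W2))) x"
    unfolding mix_join proj_pmf map_bind_pmf g_def ..
  also have "\<dots> = t * pmf (map_pmf g \<nu>1) x + (1 - t) * pmf (map_pmf g (join_pmf W2)) x"
    unfolding pmf_bind using assms by simp
  finally show ?thesis by (simp add: proj_pmf g_def)
qed

lemma rclass_cycles: "cycle_list k vs \<Longrightarrow> rclass vs \<in> cycles k"
  by (simp add: cycles_rclass)

lemma decomp:
  assumes k: "1 \<le> k"
  shows "\<mu> \<in> Mk k \<Longrightarrow> \<exists>W :: config pmf pmf. finite (set_pmf W)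
           \<and> (\<forall>\<nu>\<in>set_pmf W. \<exists>C\<in>cycles k. \<nu> = nu_cycle C)
           \<and> proj k (join_pmf W) = \<mu>"
proof (induction "card (supp k \<mu>)" arbitrary: \<mu> rule: less_induct)
  case less
  obtain vs where c: "cycle_list k vs" and alt: "\<mu> = proj k (nu_path vs) \<or>
     (\<exists>t \<mu>'. 0 < t \<and> t < 1 \<and> \<mu>' \<in> Mk k \<and> \<mu> = (\<lambda>x. t * proj k (nu_path vs) x + (1 - t) * \<mu>' x)
        \<and> card (supp k \<mu>') < card (supp k \<mu>))"
    using step[OF less.prems k] by blast
  have nc: "nu_path vs = nu_cycle (rclass vs)" "rclass vs \<in> cycles k"
    using nu_cycle_rclass[OF c] rclass_cycles[OF c] by simp_all
  show ?case
  proof (cases "\<mu> = proj k (nu_path vs)")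
    case True
    show ?thesis
      by (rule exI[of _ "return_pmf (nu_path vs)"]) (use True nc in \<open>auto simp: join_return_pmf\<close>)
  next
    case False
    then obtain t \<mu>' where t: "0 < t" "t < 1" and M': "\<mu>' \<in> Mk k"
      and eq: "\<mu> = (\<lambda>x. t * proj k (nu_path vs) x + (1 - t) * \<mu>' x)"
      and lt: "card (supp k \<mu>') < card (supp k \<mu>)" using alt by blast
    obtain W' where W': "finite (set_pmf W')" "\<forall>\<nu>\<in>set_pmf W'. \<exists>C\<in>cycles k. \<nu> = nu_cycle C"
      "proj k (join_pmf W') = \<mu>'" using less.hyps[OF lt M'] by blast
    define W where "W = bind_pmf (bernoulli_pmf t) (\<lambda>b. if b then return_pmf (nu_path vs) else W')"
    have sW: "set_pmf W = insert (nu_path vs) (set_pmf W')"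
      using t by (auto simp: W_def split: if_splits)
    have "proj k (join_pmf W) = \<mu>"
      unfolding eq W_def using t W'(3) by (intro ext) (simp add: mix_proj)
    then show ?thesis using sW W' nc by (intro exI[of _ W]) auto
  qed
qed

lemma pc_inj: assumes c1: "cycle_list k vs" and c2: "cycle_list k vs'" and k: "1 \<le> k"
  and e: "path_config vs = path_config vs'" shows "vs = vs'"
proof -
  have l: "length vs = length vs'"
    using pc_minper[OF c1 k] pc_minper[OF c2 k] e min_period_unique by metis
  show ?thesis
  proof (rule nth_equalityI[OF l])
    fix i assume "i < length vs"
    then show "vs ! i = vs' ! i"
      using win_pc_nat[OF c1, of i] win_pc_nat[OF c2, of i] e l by simp
  qed
qed

lemma nu_path_pc: "nu_path vs = translates_measure (path_config vs) (length vs)"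
  by (simp add: nu_path_def)

lemma nu_cycle_inj: assumes k: "1 \<le> k" shows "inj_on nu_cycle (cycles k)"
proof (rule inj_onI)
  fix C1 C2 assume C1: "C1 \<in> cycles k" and C2: "C2 \<in> cycles k" and e: "nu_cycle C1 = nu_cycle C2"
  obtain vs1 where c1: "cycle_list k vs1" "C1 = rclass vs1" using C1 by (auto simp: cycles_rclass)
  obtain vs2 where c2: "cycle_list k vs2" "C2 = rclass vs2" using C2 by (auto simp: cycles_rclass)
  have e2: "nu_path vs1 = nu_path vs2" using e c1 c2 nu_cycle_rclass by metis
  have p2: "0 < length vs2" using cycle_p0[OF c2(1)] .
  have p1: "0 < length vs1" using cycle_p0[OF c1(1)] .
  have "path_config vs2 \<in> set_pmf (nu_path vs2)"
    unfolding nu_path_pc set_translates[OF p2] using p2 by (auto intro!: image_eqI[of _ _ 0])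
  then have "path_config vs2 \<in> set_pmf (nu_path vs1)" using e2 by simp
  then obtain j where "path_config vs2 = shift (int j) (path_config vs1)"
    unfolding nu_path_pc set_translates[OF p1] by auto
  then have "path_config vs2 = path_config (rotate j vs1)" using pc_rotate[OF c1(1)] by simp
  then have "vs2 = rotate j vs1" using pc_inj[OF c2(1) cycle_rotate[OF c1(1)] k] by simp
  then have "vs2 \<in> rclass vs1" by (auto simp: rclass_def)
  then show "C1 = C2" using rclass_eq c1 c2 by metis
qed

lemma dvd_small_eq: assumes d: "int p dvd int j - int i" and "i < p" "j < p" shows "i = j"
proof (rule ccontr)
  assume ne: "i \<noteq> j"
  have aux: "False" if "a < b" "b < p" "int p dvd int b - int a" for a b
  proof -
    have "int b - int a = int (b - a)" using that by simp
    then have "p dvd b - a" using that(3) by (simp only: int_dvd_int_iff)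
    then show False using that nat_dvd_not_less[of "b - a" p] by simp
  qed
  show False
  proof (cases "i < j")
    case True then show ?thesis using aux[of i j] d assms by blast
  next
    case False
    then have "j < i" using ne by simp
    moreover have "int p dvd int i - int j" using d by (metis dvd_minus_iff minus_diff_eq)
    ultimately show ?thesis using aux[of j i] assms by blast
  qed
qed

lemma build:
  assumes mp: "min_period \<eta> p" and kp: "k_primitive k \<eta> p" and k: "1 \<le> k"
  shows "cycle_list k (map (\<lambda>i. win \<eta> (int i) k) [0..<p]) \<and> path_config (map (\<lambda>i. win \<eta> (int i) k) [0..<p]) = \<eta>"
proof -
  define vs where "vs = map (\<lambda>i. win \<eta> (int i) k) [0..<p]"
  have per: "is_period \<eta> p" using mp by (simp add: min_period_def)
  have p0: "0 < p" using per by (simp add: is_period_def)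
  have wmod: "win \<eta> (int (i mod p)) k = win \<eta> (int i) k" for i
  proof -
    have "\<eta> (int (i mod p) + int m) = \<eta> (int i + int m)" for m
    proof -
      have "(int (i mod p) + int m) mod int p = (int i + int m) mod int p"
        by (simp add: zmod_int[symmetric] mod_add_left_eq of_nat_add[symmetric] del: of_nat_add)
      then show ?thesis using period_mod[OF per, of "int (i mod p) + int m"] period_mod[OF per, of "int i + int m"] by simp
    qed
    then show ?thesis by (simp add: win_def)
  qed
  have dist: "distinct vs"
    unfolding distinct_conv_nth
  proof (intro allI impI)
    fix i j assume h: "i < length vs" "j < length vs" "i \<noteq> j"
    show "vs ! i \<noteq> vs ! j"
    proof
      assume "vs ! i = vs ! j"
      then have "win \<eta> (int i) k = win \<eta> (int j) k" using h by (simp add: vs_def)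
      then have "int p dvd int j - int i" using kp win_eq unfolding k_primitive_def by blast
      moreover have "i < p" "j < p" using h by (simp_all add: vs_def)
      ultimately show False using h(3) dvd_small_eq by blast
    qed
  qed
  have edge: "dB_edge k (vs ! i) (vs ! (Suc i mod length vs))" if i: "i < length vs" for i
  proof -
    have l: "length vs = p" by (simp add: vs_def)
    have a: "vs ! i = win \<eta> (int i) k" using i by (simp add: vs_def)
    have b: "vs ! (Suc i mod length vs) = win \<eta> (int (Suc i)) k"
      using p0 wmod[of "Suc i"] by (simp add: vs_def l)
    have "tl (win \<eta> (int i) k) = butlast (win \<eta> (int (Suc i)) k)"
    proof (rule nth_equalityI)
      show "length (tl (win \<eta> (int i) k)) = length (butlast (win \<eta> (int (Suc i)) k))" by simp
      fix m assume "m < length (tl (win \<eta> (int i) k))"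
      then have m: "Suc m < k" by simp
      then show "tl (win \<eta> (int i) k) ! m = butlast (win \<eta> (int (Suc i)) k) ! m"
        by (simp add: nth_tl nth_butlast win_def algebra_simps)
    qed
    then show ?thesis unfolding a b dB_edge_def by simp
  qed
  have cyc: "cycle_list k vs" unfolding cycle_list_def using dist edge p0 by (simp add: vs_def)
  have "path_config vs = \<eta>"
  proof
    fix x
    have n: "nat (x mod int p) < p" using p0 by (simp add: nat_less_iff)
    have "path_config vs x = hd (win \<eta> (int (nat (x mod int p))) k)"
      unfolding path_config_def using n by (simp add: vs_def)
    also have "\<dots> = \<eta> (x mod int p)" using k p0 by (simp add: win_def hd_map)
    also have "\<dots> = \<eta> x" by (rule period_mod[OF per])
    finally show "path_config vs x = \<eta> x" .
  qed
  then show ?thesis using cyc by (simp add: vs_def)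
qed

lemma nu_path_props: assumes c: "cycle_list k vs"
  shows "trans_inv (nu_path vs) \<and> (\<forall>\<eta>\<in>set_pmf (nu_path vs). periodic \<eta>)"
proof -
  have per: "is_period (path_config vs) (length vs)" using pc_period[OF c] .
  have p0: "0 < length vs" using cycle_p0[OF c] .
  show ?thesis
    unfolding nu_path_pc set_translates[OF p0]
    using translates_trans_inv[OF per] per period_shift by (auto simp: periodic_def)
qed

theorem theorem3:
  fixes k :: nat
  assumes "1 \<le> k"
  shows "bij_betw nu_cycle (cycles k) {\<nu>. kprim_BPC k \<nu>}
    \<and> {\<mu>. extreme_pt (Mk k) \<mu>} = (\<lambda>C. proj k (nu_cycle C)) ` cycles k
    \<and> (\<forall>\<mu>\<in>Mk k. \<exists>W :: config pmf pmf. finite (set_pmf W)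
           \<and> (\<forall>\<nu>\<in>set_pmf W. \<exists>C\<in>cycles k. \<nu> = nu_cycle C)
           \<and> proj k (join_pmf W) = \<mu>)
    \<and> (\<forall>\<mu>\<in>Mk k. \<exists>\<nu>. PC \<nu> \<and> proj k \<nu> = \<mu>)"
proof -
  have k: "1 \<le> k" by (rule assms)
  have P1: "bij_betw nu_cycle (cycles k) {\<nu>. kprim_BPC k \<nu>}"
    unfolding bij_betw_def
  proof
    show "inj_on nu_cycle (cycles k)" by (rule nu_cycle_inj[OF k])
    show "nu_cycle ` cycles k = {\<nu>. kprim_BPC k \<nu>}"
    proof (intro set_eqI iffI)
      fix \<nu> assume "\<nu> \<in> nu_cycle ` cycles k"
      then obtain vs where c: "cycle_list k vs" and "\<nu> = nu_cycle (rclass vs)"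
        by (auto simp: cycles_rclass)
      then have "\<nu> = translates_measure (path_config vs) (length vs)"
        using nu_cycle_rclass[OF c] by (simp add: nu_path_pc)
      then show "\<nu> \<in> {\<nu>. kprim_BPC k \<nu>}"
        using pc_minper[OF c k] pc_kprim[OF c] by (auto simp: kprim_BPC_def)
    next
      fix \<nu> assume "\<nu> \<in> {\<nu>. kprim_BPC k \<nu>}"
      then obtain \<eta> p where mp: "min_period \<eta> p" and kp: "k_primitive k \<eta> p"
        and nu: "\<nu> = translates_measure \<eta> p" by (auto simp: kprim_BPC_def)
      define vs where "vs = map (\<lambda>i. win \<eta> (int i) k) [0..<p]"
      have c: "cycle_list k vs" and pc: "path_config vs = \<eta>"
        using build[OF mp kp k] by (simp_all add: vs_def)
      have "\<nu> = nu_cycle (rclass vs)"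
        using nu_cycle_rclass[OF c] nu pc by (simp add: nu_path_pc vs_def)
      then show "\<nu> \<in> nu_cycle ` cycles k" using rclass_cycles[OF c] by blast
    qed
  qed
  have P3: "\<forall>\<mu>\<in>Mk k. \<exists>W :: config pmf pmf. finite (set_pmf W)
           \<and> (\<forall>\<nu>\<in>set_pmf W. \<exists>C\<in>cycles k. \<nu> = nu_cycle C)
           \<and> proj k (join_pmf W) = \<mu>"
  proof (intro ballI)
    fix \<mu> assume "\<mu> \<in> Mk k"
    then show "\<exists>W :: config pmf pmf. finite (set_pmf W)
           \<and> (\<forall>\<nu>\<in>set_pmf W. \<exists>C\<in>cycles k. \<nu> = nu_cycle C)
           \<and> proj k (join_pmf W) = \<mu>" by (rule decomp[OF k])
  qed
  have P4: "\<forall>\<mu>\<in>Mk k. \<exists>\<nu>. PC \<nu> \<and> proj k \<nu> = \<mu>"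
  proof
    fix \<mu> assume mM: "\<mu> \<in> Mk k"
    obtain W :: "config pmf pmf" where W0: "finite (set_pmf W)" and W: "\<forall>\<nu>\<in>set_pmf W. \<exists>C\<in>cycles k. \<nu> = nu_cycle C"
      "proj k (join_pmf W) = \<mu>" using bspec[OF P3 mM] by (elim exE conjE)
    have el: "trans_inv \<nu> \<and> (\<forall>\<eta>\<in>set_pmf \<nu>. periodic \<eta>)" if hW: "\<nu> \<in> set_pmf W" for \<nu>
    proof -
      obtain C where C: "C \<in> cycles k" "\<nu> = nu_cycle C" using bspec[OF W(1) hW] by (elim bexE)
      from C(1) have "C \<in> rclass ` {vs. cycle_list k vs}" by (simp only: cycles_rclass)
      then obtain vs where c: "cycle_list k vs" "C = rclass vs" by (elim imageE) simp
      have "\<nu> = nu_path vs" using C(2) c nu_cycle_rclass[OF c(1)] by simp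
      then show ?thesis using nu_path_props[OF c(1)] by simp
    qed
    have "map_pmf (map_pmf (shift 1)) W = W"
    proof (rule map_pmf_idI)
      fix \<nu> assume h: "\<nu> \<in> set_pmf W"
      show "map_pmf (shift 1) \<nu> = \<nu>" using conjunct1[OF el[OF h]] unfolding trans_inv_def .
    qed
    then have "map_pmf (shift 1) (join_pmf W) = join_pmf W"
      unfolding map_join_pmf by simp
    moreover have "\<forall>\<eta>\<in>set_pmf (join_pmf W). periodic \<eta>"
    proof
      fix \<eta> assume "\<eta> \<in> set_pmf (join_pmf W)"
      then obtain \<nu> where "\<nu> \<in> set_pmf W" "\<eta> \<in> set_pmf \<nu>" by auto
      then show "periodic \<eta>" using el by blast
    qed
    ultimately have "PC (join_pmf W)" by (simp add: PC_def trans_inv_def)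
    then show "\<exists>\<nu>. PC \<nu> \<and> proj k \<nu> = \<mu>" using W(2) by blast
  qed
  have P2: "{\<mu>. extreme_pt (Mk k) \<mu>} = (\<lambda>C. proj k (nu_cycle C)) ` cycles k"
  proof (intro set_eqI iffI)
    fix \<mu> assume "\<mu> \<in> {\<mu>. extreme_pt (Mk k) \<mu>}"
    then have ex: "extreme_pt (Mk k) \<mu>" by simp
    then have M: "\<mu> \<in> Mk k" by (simp add: extreme_pt_def)
    obtain vs where c: "cycle_list k vs" and alt: "\<mu> = proj k (nu_path vs) \<or>
       (\<exists>t \<mu>'. 0 < t \<and> t < 1 \<and> \<mu>' \<in> Mk k \<and> \<mu> = (\<lambda>x. t * proj k (nu_path vs) x + (1 - t) * \<mu>' x)
          \<and> card (supp k \<mu>') < card (supp k \<mu>))"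
      using step[OF M k] by blast
    have "\<mu> = proj k (nu_path vs)"
    proof (cases "\<mu> = proj k (nu_path vs)")
      case False
      then obtain t \<mu>' where t: "0 < t" "t < 1" and M': "\<mu>' \<in> Mk k"
        and eq: "\<mu> = (\<lambda>x. t * proj k (nu_path vs) x + (1 - t) * \<mu>' x)" using alt by blast
      have nex: "\<not> (\<exists>a\<in>Mk k. \<exists>b\<in>Mk k. \<exists>t. 0 < t \<and> t < 1 \<and> a \<noteq> b \<and> \<mu> = (\<lambda>z. t * a z + (1 - t) * b z))"
        using ex unfolding extreme_pt_def by (elim conjE)
      have "proj k (nu_path vs) = \<mu>'"
      proof (rule ccontr)
        assume ne: "proj k (nu_path vs) \<noteq> \<mu>'"
        have "\<exists>a\<in>Mk k. \<exists>b\<in>Mk k. \<exists>t. 0 < t \<and> t < 1 \<and> a \<noteq> b \<and> \<mu> = (\<lambda>z. t * a z + (1 - t) * b z)"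
          proof -
          have "0 < t \<and> t < 1 \<and> proj k (nu_path vs) \<noteq> \<mu>' \<and> \<mu> = (\<lambda>z. t * proj k (nu_path vs) z + (1 - t) * \<mu>' z)"
            using t ne eq by simp
          then show ?thesis using pi_Mk[OF c] M' by blast
        qed
        then show False using nex by contradiction
      qed
      then show ?thesis using eq by (simp add: algebra_simps)
    qed simp
    then show "\<mu> \<in> (\<lambda>C. proj k (nu_cycle C)) ` cycles k"
      using nu_cycle_rclass[OF c] rclass_cycles[OF c] by (auto intro!: image_eqI[of _ _ "rclass vs"])
  next
    fix \<mu> assume "\<mu> \<in> (\<lambda>C. proj k (nu_cycle C)) ` cycles k"
    then obtain vs where c: "cycle_list k vs" and mu: "\<mu> = proj k (nu_path vs)"
      using nu_cycle_rclass by (auto simp: cycles_rclass)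
    have "extreme_pt (Mk k) \<mu>"
      unfolding extreme_pt_def
    proof (intro conjI notI)
      show "\<mu> \<in> Mk k" using pi_Mk[OF c] mu by simp
      assume "\<exists>a\<in>Mk k. \<exists>b\<in>Mk k. \<exists>t. 0 < t \<and> t < 1 \<and> a \<noteq> b \<and> \<mu> = (\<lambda>z. t * a z + (1 - t) * b z)"
      then obtain a b t where a: "a \<in> Mk k" and b: "b \<in> Mk k" and t: "0 < t" "t < 1" and ab: "a \<noteq> b"
        and eq: "\<mu> = (\<lambda>z. t * a z + (1 - t) * b z)" by blast
      have zero: "a x = 0 \<and> b x = 0" if "x \<notin> Eset k vs" for x
      proof -
        have "\<mu> x = 0" using that mu proj_nu_path[OF c] by simp
        moreover have "\<mu> x = t * a x + (1 - t) * b x" using fun_cong[OF eq, of x] by simp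
        ultimately have "t * a x + (1 - t) * b x = 0" by simp
        moreover have "0 \<le> t * a x" "0 \<le> (1 - t) * b x" using Mk_nonneg[OF a] Mk_nonneg[OF b] t by simp_all
        ultimately have "t * a x = 0" "(1 - t) * b x = 0" by linarith+
        then show ?thesis using t by simp
      qed
      have "a = proj k (nu_path vs)" using cyc_unique[OF c k a] zero by blast
      moreover have "b = proj k (nu_path vs)" using cyc_unique[OF c k b] zero by blast
      ultimately show False using ab by simp
    qed
    then show "\<mu> \<in> {\<mu>. extreme_pt (Mk k) \<mu>}" by simp
  qed
  show ?thesis by (intro conjI P1 P2 P3 P4)
qed

end
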